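(* Let $A\in\mathbb{R}^{n\times n}$ be symmetric with eigenvalues $\alpha_1\ge\cdots\ge\alpha_n$, $g\in\mathbb{R}^n$ nonzero, $\Delta>0$, and consider the TRS of minimizing $f(x)=\frac12x^TAx+x^Tg$ subject to $\|x\|\le\Delta$, in the easy case. With $x_{opt},\lambda_{opt},A_{opt},\kappa,x_k,\lambda_k,k_{\max},\epsilon_k$ as in the context, suppose $\|x_{opt}\|=\|x_k\|=\Delta$ for some $k\in\{1,\ldots,k_{\max}\}$ and let $r_k=(A+\lambda_kI)x_k+g$. Then $$\|r_k\|\le\|A_{opt}\|\sqrt{1+\frac{\epsilon_k^2}{\Delta^2}}\;\epsilon_k\le 2\|A_{opt}\|\sqrt{\Delta^2+\epsilon_k^2}\Big(\frac{\sqrt\kappa-1}{\sqrt\kappa+1}\Big)^k.$$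
   Context: All norms are Euclidean. $x_{opt}$ is a global minimizer of the TRS and $\lambda_{opt}\ge0$ its Lagrange multiplier: $(A+\lambda_{opt}I)x_{opt}=-g$, $\lambda_{opt}(\Delta-\|x_{opt}\|)=0$, $A+\lambda_{opt}I\succeq0$. Easy case: $\lambda_{opt}>-\alpha_n$. $A_{opt}=A+\lambda_{opt}I$, $\kappa=(\alpha_1+\lambda_{opt})/(\alpha_n+\lambda_{opt})$. The Lanczos process on $A$ with starting vector $g$ gives $Q_k=[q_1,\ldots,q_k]$ with orthonormal columns spanning $\mathcal{K}_k(A,g)=\mathrm{span}\{g,\ldots,A^{k-1}g\}$, $q_1=g/\|g\|$, tridiagonal $T_k=Q_k^TAQ_k$, and $AQ_k=Q_kT_k+\beta_kq_{k+1}e_k^T$; $k_{\max}$ is the first step at which Lanczos breaks down. GLTR iterate: $x_k=Q_kh_k$ where $h_k$ minimizes $\frac12h^TT_kh+\|g\|h^Te_1$ over $\|h\|\le\Delta$, with multiplier $\lambda_k\ge0$: $(T_k+\lambda_kI)h_k=-\|g\|e_1$, $\lambda_k(\Delta-\|h_k\|)=0$, $T_k+\lambda_kI\succeq0$. $\epsilon_k=\|(I-Q_kQ_k^T)x_{opt}\|=\min_{x\in\mathcal{K}_k(A,g)}\|x-x_{opt}\|$. *)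

theory Defs
  imports "HOL-Analysis.Analysis"
begin

text \<open>Objective of the trust-region subproblem (TRS).\<close>
definition trs_f :: "real^'n^'n \<Rightarrow> real^'n \<Rightarrow> real^'n \<Rightarrow> real" where
  "trs_f A g x = (1/2) * (x \<bullet> (A *v x)) + x \<bullet> g"

text \<open>Eigenvalues of a (symmetric) matrix; alpha_1 is the largest, alpha_n the smallest.\<close>
definition eigvals :: "real^'n^'n \<Rightarrow> real set" where
  "eigvals A = {a. \<exists>v. v \<noteq> 0 \<and> A *v v = a *\<^sub>R v}"

definition alpha_max :: "real^'n^'n \<Rightarrow> real" where
  "alpha_max A = Max (eigvals A)"

definition alpha_min :: "real^'n^'n \<Rightarrow> real" where
  "alpha_min A = Min (eigvals A)"

text \<open>Krylov subspace K_k(A,g) = span{g, Ag, ..., A^(k-1) g}.\<close>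
definition krylov :: "real^'n^'n \<Rightarrow> real^'n \<Rightarrow> nat \<Rightarrow> (real^'n) set" where
  "krylov A g k = span {((\<lambda>v. A *v v) ^^ j) g | j. j < k}"

text \<open>k_max: the first step at which Lanczos breaks down, i.e. beta_k = 0,
  equivalently K_(k+1)(A,g) = K_k(A,g).\<close>
definition k_max :: "real^'n^'n \<Rightarrow> real^'n \<Rightarrow> nat" where
  "k_max A g = (LEAST k. 1 \<le> k \<and> krylov A g (Suc k) = krylov A g k)"

text \<open>Lanczos vectors q_1,...,q_k (indexed 1..k): orthonormal, q_1 = g/||g||, and
  span{q_1..q_j} = K_j(A,g) for every j \<le> k (this is what the Lanczos process produces).\<close>
definition lanczos_vectors :: "real^'n^'n \<Rightarrow> real^'n \<Rightarrow> nat \<Rightarrow> (nat \<Rightarrow> real^'n) \<Rightarrow> bool" where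
  "lanczos_vectors A g k q \<longleftrightarrow>
     (\<forall>i\<in>{1..k}. \<forall>j\<in>{1..k}. q i \<bullet> q j = (if i = j then 1 else 0)) \<and>
     q 1 = (1 / norm g) *\<^sub>R g \<and>
     (\<forall>j\<in>{1..k}. span (q ` {1..j}) = krylov A g j)"

text \<open>Entries of the tridiagonal matrix T_k = Q_k^T A Q_k.\<close>
definition lanczos_T :: "real^'n^'n \<Rightarrow> (nat \<Rightarrow> real^'n) \<Rightarrow> nat \<Rightarrow> nat \<Rightarrow> real" where
  "lanczos_T A q i j = q i \<bullet> (A *v q j)"

text \<open>Vectors in R^k are represented as h :: nat => real, using only the entries 1..k.\<close>
definition knorm :: "nat \<Rightarrow> (nat \<Rightarrow> real) \<Rightarrow> real" where
  "knorm k h = sqrt (\<Sum>i=1..k. (h i)^2)"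

text \<open>Reduced objective  1/2 h^T T_k h + ||g|| h^T e_1.\<close>
definition gltr_phi :: "real^'n^'n \<Rightarrow> real^'n \<Rightarrow> (nat \<Rightarrow> real^'n) \<Rightarrow> nat \<Rightarrow> (nat \<Rightarrow> real) \<Rightarrow> real" where
  "gltr_phi A g q k h =
     (1/2) * (\<Sum>i=1..k. \<Sum>j=1..k. h i * lanczos_T A q i j * h j) + norm g * h 1"

text \<open>h_k together with multiplier lambda_k: h_k minimizes the reduced problem over ||h|| \<le> Delta and
  (T_k + lambda_k I) h_k = -||g|| e_1, lambda_k (Delta - ||h_k||) = 0, T_k + lambda_k I psd.\<close>
definition gltr_sol :: "real^'n^'n \<Rightarrow> real^'n \<Rightarrow> real \<Rightarrow> (nat \<Rightarrow> real^'n) \<Rightarrow> nat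
                         \<Rightarrow> (nat \<Rightarrow> real) \<Rightarrow> real \<Rightarrow> bool" where
  "gltr_sol A g \<Delta> q k h lam \<longleftrightarrow>
     knorm k h \<le> \<Delta> \<and>
     (\<forall>h'. knorm k h' \<le> \<Delta> \<longrightarrow> gltr_phi A g q k h \<le> gltr_phi A g q k h') \<and>
     lam \<ge> 0 \<and>
     (\<forall>i\<in>{1..k}. (\<Sum>j=1..k. lanczos_T A q i j * h j) + lam * h i
                    = - norm g * (if i = 1 then 1 else 0)) \<and>
     lam * (\<Delta> - knorm k h) = 0 \<and>
     (\<forall>y. (\<Sum>i=1..k. \<Sum>j=1..k. y i * (lanczos_T A q i j + (if i = j then lam else 0)) * y j) \<ge> 0)"

text \<open>x_k = Q_k h_k.\<close>
definition lanczos_comb :: "(nat \<Rightarrow> real^'n) \<Rightarrow> nat \<Rightarrow> (nat \<Rightarrow> real) \<Rightarrow> real^'n" where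
  "lanczos_comb q k h = (\<Sum>i=1..k. h i *\<^sub>R q i)"

text \<open>epsilon_k = ||(I - Q_k Q_k^T) x_opt||.\<close>
definition eps_k :: "(nat \<Rightarrow> real^'n) \<Rightarrow> nat \<Rightarrow> real^'n \<Rightarrow> real" where
  "eps_k q k x = norm (x - (\<Sum>i=1..k. (q i \<bullet> x) *\<^sub>R q i))"

end

theory Submission
  imports Defs
begin


lemma sym_inner:
  fixes M :: "real^'n^'n"
  assumes "transpose M = M"
  shows "(M *v x) \<bullet> y = x \<bullet> (M *v y)"
proof -
  have "x v* M = M *v x" using vector_transpose_matrix[of x M] assms by simp
  then show ?thesis using dot_lmul_matrix[of x M y] by simp
qed

lemma quad_nonpos_coeff:
  fixes c D :: real
  assumes "\<And>t. 2 * t * c + t^2 * D \<le> 0"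
  shows "c = 0"
proof (rule ccontr)
  assume "c \<noteq> 0"
  define t where "t = c / (\<bar>D\<bar> + 1)"
  have pos: "\<bar>D\<bar> + 1 > 0" by simp
  have "2 * t * c + t^2 * D \<le> 0" by (rule assms)
  hence "(2 * t * c + t^2 * D) * (\<bar>D\<bar> + 1)^2 \<le> 0"
    by (simp add: mult_nonpos_nonneg)
  moreover have "(2 * t * c + t^2 * D) * (\<bar>D\<bar> + 1)^2 = c^2 * (2 * (\<bar>D\<bar> + 1) + D)"
  proof -
    have tN: "t * (\<bar>D\<bar> + 1) = c" unfolding t_def using pos by simp
    have "(2 * t * c + t^2 * D) * (\<bar>D\<bar> + 1)^2
        = 2 * c * (t * (\<bar>D\<bar> + 1)) * (\<bar>D\<bar> + 1) + (t * (\<bar>D\<bar> + 1))^2 * D"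
      by (simp add: algebra_simps power2_eq_square)
    also have "\<dots> = c^2 * (2 * (\<bar>D\<bar> + 1) + D)" unfolding tN by (simp add: algebra_simps power2_eq_square)
    finally show ?thesis .
  qed
  moreover have "c^2 * (2 * (\<bar>D\<bar> + 1) + D) > 0"
    using \<open>c \<noteq> 0\<close> by (intro mult_pos_pos) (auto simp: abs_if)
  ultimately show False by linarith
qed

lemma eigvec_exists:
  fixes M :: "real^'n^'n"
  assumes sym: "transpose M = M" and W: "subspace W" and inv: "\<And>x. x \<in> W \<Longrightarrow> M *v x \<in> W"
    and nz: "W \<noteq> {0}"
  shows "\<exists>v\<in>W. norm v = 1 \<and> M *v v = (v \<bullet> (M *v v)) *\<^sub>R v"
proof -
  define S where "S = W \<inter> sphere 0 1"
  have "closed W" using W by (simp add: closed_subspace)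
  hence cS: "compact S" unfolding S_def by (simp add: closed_Int_compact)
  obtain x where x: "x \<in> W" "x \<noteq> 0" using nz W subspace_0 by blast
  have "(1 / norm x) *\<^sub>R x \<in> S" unfolding S_def using x W by (simp add: subspace_scale)
  hence neS: "S \<noteq> {}" by blast
  have "continuous_on S (\<lambda>x. x \<bullet> (M *v x))"
    by (intro continuous_intros continuous_on_inner linear_continuous_on
        bounded_linear_inner_right matrix_vector_mul_bounded_linear) 
  then obtain v where v: "v \<in> S" and vmax: "\<And>y. y \<in> S \<Longrightarrow> y \<bullet> (M *v y) \<le> v \<bullet> (M *v v)"
    using continuous_attains_sup[OF cS neS] by blast
  define m where "m = v \<bullet> (M *v v)"
  have vW: "v \<in> W" and vn: "norm v = 1" using v unfolding S_def by auto
  have vv: "v \<bullet> v = 1" using vn by (simp add: norm_eq_1)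
  have key: "w \<bullet> (M *v v) = 0" if wW: "w \<in> W" and wv: "w \<bullet> v = 0" for w
  proof -
    have "2 * t * (w \<bullet> (M *v v)) + t^2 * (w \<bullet> (M *v w) - m * (w \<bullet> w)) \<le> 0" for t
    proof -
      define u where "u = v + t *\<^sub>R w"
      have uW: "u \<in> W" unfolding u_def using vW wW W by (simp add: subspace_add subspace_scale)
      have uu: "u \<bullet> u = 1 + t^2 * (w \<bullet> w)"
        unfolding u_def using vv wv by (simp add: inner_add_left inner_add_right inner_commute power2_eq_square)
      hence upos: "u \<bullet> u > 0" by (simp add: add_pos_nonneg)
      hence "u \<noteq> 0" by auto
      hence "(1 / norm u) *\<^sub>R u \<in> S" unfolding S_def using uW W by (simp add: subspace_scale)
      hence "((1 / norm u) *\<^sub>R u) \<bullet> (M *v ((1 / norm u) *\<^sub>R u)) \<le> m"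
        using vmax m_def by blast
      hence "(u \<bullet> (M *v u)) / (u \<bullet> u) \<le> m"
        by (simp add: matrix_vector_mult_scaleR power2_norm_eq_inner[symmetric] power2_eq_square)
      hence le: "u \<bullet> (M *v u) \<le> m * (u \<bullet> u)" using upos by (simp add: divide_le_eq)
      have symw: "v \<bullet> (M *v w) = w \<bullet> (M *v v)"
        using sym_inner[OF sym, of w v] by (simp add: inner_commute)
      have "u \<bullet> (M *v u) = m + 2 * t * (w \<bullet> (M *v v)) + t^2 * (w \<bullet> (M *v w))"
        unfolding u_def m_def using symw
        by (simp add: matrix_vector_right_distrib matrix_vector_mult_scaleR inner_add_left
            inner_add_right power2_eq_square algebra_simps)
      with le uu show ?thesis by (simp add: algebra_simps)
    qed
    then show ?thesis using quad_nonpos_coeff by blast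
  qed
  define r where "r = M *v v - m *\<^sub>R v"
  have rW: "r \<in> W" unfolding r_def using inv[OF vW] vW W by (simp add: subspace_diff subspace_scale)
  have rv: "r \<bullet> v = 0" unfolding r_def m_def using vv
    by (simp add: inner_diff_left inner_diff_right inner_commute)
  have "r \<bullet> (M *v v) = 0" using key[OF rW rv] .
  hence "r \<bullet> r = 0" unfolding r_def using rv[unfolded r_def]
    by (simp add: inner_diff_left inner_diff_right)
  hence "r = 0" by simp
  thus ?thesis using vW vn unfolding r_def m_def by auto
qed

definition onb :: "(real^'n) set \<Rightarrow> bool" where
  "onb E \<longleftrightarrow> finite E \<and> (\<forall>e\<in>E. \<forall>e'\<in>E. e \<bullet> e' = (if e = e' then 1 else 0))"

lemma spectral_sub:
  fixes M :: "real^'n^'n"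
  assumes sym: "transpose M = M"
  shows "subspace W \<Longrightarrow> (\<forall>x\<in>W. M *v x \<in> W) \<Longrightarrow>
    \<exists>E. E \<subseteq> W \<and> onb E \<and> span E = W \<and> (\<forall>e\<in>E. M *v e = (e \<bullet> (M *v e)) *\<^sub>R e)"
proof (induction "dim W" arbitrary: W rule: less_induct)
  case less
  show ?case
  proof (cases "W = {0}")
    case True
    then show ?thesis by (intro exI[of _ "{}"]) (auto simp: onb_def)
  next
    case False
    obtain v where vW: "v \<in> W" and vn: "norm v = 1" and vev: "M *v v = (v \<bullet> (M *v v)) *\<^sub>R v"
      using eigvec_exists[OF sym less.prems(1) _ False] less.prems(2) by blast
    have vv: "v \<bullet> v = 1" using vn by (simp add: norm_eq_1)
    define W' where "W' = {x\<in>W. x \<bullet> v = 0}"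
    have sW': "subspace W'" unfolding W'_def subspace_def using less.prems(1)
      by (auto simp: subspace_def inner_add_left)
    have iW': "\<forall>x\<in>W'. M *v x \<in> W'"
    proof
      fix x assume x: "x \<in> W'"
      have "(M *v x) \<bullet> v = x \<bullet> (M *v v)" by (rule sym_inner[OF sym])
      also have "\<dots> = (v \<bullet> (M *v v)) * (x \<bullet> v)" by (subst vev) simp
      also have "\<dots> = 0" using x unfolding W'_def by simp
      finally show "M *v x \<in> W'" using x less.prems(2) unfolding W'_def by auto
    qed
    have sub: "W' \<subset> W"
    proof -
      have "W' \<subseteq> W" unfolding W'_def by auto
      moreover have "v \<notin> W'" using vv unfolding W'_def by auto
      ultimately show ?thesis using vW by blast
    qed
    have s1: "span W' = W'" using sW' by (simp add: span_eq_iff)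
    have s2: "span W = W" using less.prems(1) by (simp add: span_eq_iff)
    have "dim W' < dim W"
      using dim_psubset[of W' W] sub unfolding s1 s2 by simp
    then obtain E' where E': "E' \<subseteq> W'" "onb E'" "span E' = W'" "\<forall>e\<in>E'. M *v e = (e \<bullet> (M *v e)) *\<^sub>R e"
      using less.hyps[OF _ sW' iW'] by blast
    have vE': "v \<notin> E'" using E'(1) vv unfolding W'_def by auto
    have orth: "\<forall>e\<in>E'. e \<bullet> v = 0" using E'(1) unfolding W'_def by auto
    define E where "E = insert v E'"
    have "onb E" using E'(2) vE' orth vv unfolding onb_def E_def
      by (auto simp: inner_commute)
    moreover have "E \<subseteq> W" using E'(1) vW unfolding E_def W'_def by auto
    moreover have "span E = W"
    proof
      show "span E \<subseteq> W" using \<open>E \<subseteq> W\<close> less.prems(1) by (simp add: span_minimal)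
      show "W \<subseteq> span E"
      proof
        fix x assume x: "x \<in> W"
        have "x - (x \<bullet> v) *\<^sub>R v \<in> W'" unfolding W'_def using x vW vv less.prems(1)
          by (simp add: subspace_diff subspace_scale inner_diff_left)
        hence "x - (x \<bullet> v) *\<^sub>R v \<in> span E" using E'(3) span_mono[of E' E] unfolding E_def by auto
        moreover have "(x \<bullet> v) *\<^sub>R v \<in> span E" unfolding E_def by (simp add: span_base span_scale)
        ultimately have "(x - (x \<bullet> v) *\<^sub>R v) + (x \<bullet> v) *\<^sub>R v \<in> span E" by (rule span_add)
        thus "x \<in> span E" by simp
      qed
    qed
    moreover have "\<forall>e\<in>E. M *v e = (e \<bullet> (M *v e)) *\<^sub>R e" using E'(4) vev unfolding E_def by auto
    ultimately show ?thesis by blast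
  qed
qed

lemma onb_sum_inner:
  assumes "onb E" "e \<in> E"
  shows "(\<Sum>x\<in>E. c x *\<^sub>R x) \<bullet> e = c e"
proof -
  have "(\<Sum>x\<in>E. c x *\<^sub>R x) \<bullet> e = (\<Sum>x\<in>E. c x * (x \<bullet> e))" by (simp add: inner_sum_left)
  also have "\<dots> = (\<Sum>x\<in>E. if x = e then c x else 0)"
    using assms unfolding onb_def by (intro sum.cong) auto
  also have "\<dots> = c e" using assms unfolding onb_def by simp
  finally show ?thesis .
qed

lemma onb_norm2:
  assumes "onb E"
  shows "(norm (\<Sum>x\<in>E. c x *\<^sub>R x))^2 = (\<Sum>x\<in>E. (c x)^2)"
proof -
  have "(norm (\<Sum>x\<in>E. c x *\<^sub>R x))^2 = (\<Sum>x\<in>E. c x *\<^sub>R x) \<bullet> (\<Sum>x\<in>E. c x *\<^sub>R x)"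
    by (simp add: power2_norm_eq_inner)
  also have "\<dots> = (\<Sum>x\<in>E. c x * (x \<bullet> (\<Sum>y\<in>E. c y *\<^sub>R y)))"
    by (simp add: inner_sum_left)
  also have "\<dots> = (\<Sum>x\<in>E. c x * ((\<Sum>y\<in>E. c y *\<^sub>R y) \<bullet> x))"
    by (simp add: inner_commute)
  also have "\<dots> = (\<Sum>x\<in>E. (c x)^2)"
    using onb_sum_inner[OF assms] by (intro sum.cong) (auto simp: power2_eq_square)
  finally show ?thesis .
qed

lemma onb_expand:
  assumes "onb E" "span E = UNIV"
  shows "x = (\<Sum>e\<in>E. (e \<bullet> x) *\<^sub>R e)"
proof -
  have fin: "finite E" using assms unfolding onb_def by auto
  have "x \<in> span E" using assms by simp
  then obtain c where c: "x = (\<Sum>e\<in>E. c e *\<^sub>R e)"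
    using span_finite[OF fin] by auto
  have "e \<bullet> x = c e" if "e \<in> E" for e
    using onb_sum_inner[OF assms(1) that, of c] c by (simp add: inner_commute)
  then show ?thesis using c by (metis (no_types, lifting) sum.cong)
qed

lemma spectral:
  fixes M :: "real^'n^'n"
  assumes sym: "transpose M = M"
  obtains E \<mu> where "onb E" "span E = UNIV" "\<And>e. e \<in> E \<Longrightarrow> M *v e = \<mu> e *\<^sub>R e"
proof -
  obtain E where "onb E" "span E = UNIV" "\<forall>e\<in>E. M *v e = (e \<bullet> (M *v e)) *\<^sub>R e"
    using spectral_sub[OF sym, of UNIV] by auto
  then show thesis using that[of E "\<lambda>e. e \<bullet> (M *v e)"] by blast
qed


lemma smat_mult[simp]: "(c *\<^sub>R mat 1) *v x = c *\<^sub>R (x::real^'n)"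
  by (metis matrix_scaleR_vector_ac matrix_vector_mul_lid)

lemma nat_induct012:
  assumes "P 0" "P (Suc 0)" "\<And>n. P n \<Longrightarrow> P (Suc n) \<Longrightarrow> P (Suc (Suc n))"
  shows "P n"
proof -
  have "P n \<and> P (Suc n)" by (induction n) (use assms in auto)
  then show ?thesis by simp
qed

fun cheb :: "nat \<Rightarrow> real \<Rightarrow> real" where
  "cheb 0 x = 1"
| "cheb (Suc 0) x = x"
| "cheb (Suc (Suc n)) x = 2 * x * cheb (Suc n) x - cheb n x"

lemma cheb_cos: "cheb n (cos t) = cos (real n * t)"
proof (induction n rule: nat_induct012)
  case (3 n)
  note IH = 3
  define a where "a = real (Suc n) * t"
  have e1: "real (Suc (Suc n)) * t = a + t" unfolding a_def by (simp add: algebra_simps)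
  have e2: "real n * t = a - t" unfolding a_def by (simp add: algebra_simps)
  have c1: "cheb n (cos t) = cos (a - t)" using IH(1) e2 by simp
  have c2: "cheb (Suc n) (cos t) = cos a" using IH(2) a_def by simp
  have "cheb (Suc (Suc n)) (cos t) = 2 * cos t * cos a - cos (a - t)"
    by (simp only: cheb.simps c1 c2)
  also have "\<dots> = cos (a + t)" by (simp add: cos_add cos_diff algebra_simps)
  finally show ?case unfolding e1 .
qed auto

lemma cheb_abs: "\<bar>x\<bar> \<le> 1 \<Longrightarrow> \<bar>cheb n x\<bar> \<le> 1"
  using cheb_cos[of n "arccos x"] cos_arccos_abs[of x] abs_cos_le_one by metis

lemma cheb_u:
  fixes u :: real
  assumes "u * v = 1"
  shows "cheb n ((u + v) / 2) = (u^n + v^n) / 2"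
proof (induction n rule: nat_induct012)
  case (3 n)
  note IH = 3
  have a: "u * v^(Suc n) = v^n" using assms by (simp add: mult.assoc[symmetric])
  have b: "v * u^(Suc n) = u^n" using assms by (simp add: mult.assoc[symmetric] mult.commute)
  have "cheb (Suc (Suc n)) ((u + v) / 2) = 2 * ((u + v) / 2) * ((u^(Suc n) + v^(Suc n)) / 2) - (u^n + v^n) / 2"
    by (simp only: cheb.simps IH)
  also have "\<dots> = (u * u^(Suc n) + v * v^(Suc n) + u * v^(Suc n) + v * u^(Suc n) - (u^n + v^n)) / 2"
    by (simp add: field_simps)
  also have "\<dots> = (u^(Suc (Suc n)) + v^(Suc (Suc n))) / 2" unfolding a b by simp
  finally show ?case .
qed auto

definition cstep :: "real^'n^'n \<Rightarrow> real \<Rightarrow> real \<Rightarrow> real^'n \<Rightarrow> real^'n" where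
  "cstep B c0 d v = c0 *\<^sub>R v - d *\<^sub>R (B *v v)"

fun cvec :: "real^'n^'n \<Rightarrow> real \<Rightarrow> real \<Rightarrow> real^'n \<Rightarrow> nat \<Rightarrow> real^'n" where
  "cvec B c0 d x 0 = x"
| "cvec B c0 d x (Suc 0) = cstep B c0 d x"
| "cvec B c0 d x (Suc (Suc n)) = 2 *\<^sub>R cstep B c0 d (cvec B c0 d x (Suc n)) - cvec B c0 d x n"

lemma cstep_sum:
  assumes "\<And>e. e \<in> E \<Longrightarrow> B *v e = \<mu> e *\<^sub>R e"
  shows "cstep B c0 d (\<Sum>e\<in>E. a e *\<^sub>R e) = (\<Sum>e\<in>E. (a e * (c0 - d * \<mu> e)) *\<^sub>R e)"
proof -
  have "B *v (\<Sum>e\<in>E. a e *\<^sub>R e) = (\<Sum>e\<in>E. (a e * \<mu> e) *\<^sub>R e)"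
    using assms by (simp add: vec.sum matrix_vector_mult_scaleR)
  then show ?thesis unfolding cstep_def
    by (simp add: scaleR_sum_right sum_subtractf[symmetric] algebra_simps)
qed

lemma cvec_expand:
  assumes "\<And>e. e \<in> E \<Longrightarrow> B *v e = \<mu> e *\<^sub>R e"
  shows "cvec B c0 d (\<Sum>e\<in>E. a e *\<^sub>R e) n = (\<Sum>e\<in>E. (a e * cheb n (c0 - d * \<mu> e)) *\<^sub>R e)"
proof (induction n rule: nat_induct012)
  case 2
  then show ?case using cstep_sum[OF assms] by simp
next
  case (3 n)
  note IH = 3
  show ?case using 3 cstep_sum[OF assms]
    by (simp add: scaleR_sum_right sum_subtractf[symmetric] algebra_simps)
qed auto

lemma krylov_mono: "m \<le> n \<Longrightarrow> krylov A g m \<subseteq> krylov A g n"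
  unfolding krylov_def by (rule span_mono) auto

lemma g_in_krylov: "1 \<le> n \<Longrightarrow> g \<in> krylov A g n"
  unfolding krylov_def by (rule span_base) (auto intro!: exI[of _ 0])

lemma krylov_step: "v \<in> krylov A g n \<Longrightarrow> A *v v \<in> krylov A g (Suc n)"
proof -
  assume v: "v \<in> krylov A g n"
  let ?f = "\<lambda>v. A *v v"
  have "?f v \<in> ?f ` span {(?f ^^ j) g | j. j < n}" using v unfolding krylov_def by blast
  also have "\<dots> = span (?f ` {(?f ^^ j) g | j. j < n})"
    using span_linear_image[OF matrix_vector_mul_linear[of A]] by simp
  also have "\<dots> \<subseteq> span {(?f ^^ j) g | j. j < Suc n}"
  proof (rule span_mono)
    show "?f ` {(?f ^^ j) g | j. j < n} \<subseteq> {(?f ^^ j) g | j. j < Suc n}"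
    proof
      fix y assume "y \<in> ?f ` {(?f ^^ j) g | j. j < n}"
      then obtain j where "j < n" "y = ?f ((?f ^^ j) g)" by blast
      then have "y = (?f ^^ (Suc j)) g" "Suc j < Suc n" by auto
      then show "y \<in> {(?f ^^ j) g | j. j < Suc n}" by blast
    qed
  qed
  finally show ?thesis unfolding krylov_def .
qed

lemma krylov_subspace: "subspace (krylov A g n)"
  unfolding krylov_def by (rule subspace_span)

lemma cvec_krylov:
  assumes B: "B = A + lam *\<^sub>R mat 1" and Bx: "B *v x = - g"
  shows "cvec B c0 d x n - cheb n c0 *\<^sub>R x \<in> krylov A g n"
proof (induction n rule: nat_induct012)
  case 1
  then show ?case unfolding krylov_def by (simp add: span_zero)
next
  case 2
  have "cvec B c0 d x (Suc 0) - cheb (Suc 0) c0 *\<^sub>R x = d *\<^sub>R g"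
    using Bx by (simp add: cstep_def)
  then show ?case using g_in_krylov[of "Suc 0" g A] by (simp add: span_scale krylov_def)
next
  case (3 n)
  note IH = 3
  let ?K = "krylov A g (Suc (Suc n))"
  define s1 where "s1 = cvec B c0 d x (Suc n) - cheb (Suc n) c0 *\<^sub>R x"
  define s0 where "s0 = cvec B c0 d x n - cheb n c0 *\<^sub>R x"
  have s1K: "s1 \<in> ?K" using 3(2) krylov_mono[of "Suc n" "Suc (Suc n)"] unfolding s1_def by auto
  have s0K: "s0 \<in> ?K" using 3(1) krylov_mono[of n "Suc (Suc n)"] unfolding s0_def by auto
  have "A *v s1 \<in> ?K" using krylov_step 3(2) unfolding s1_def by blast
  hence Bs1: "B *v s1 \<in> ?K" unfolding B using s1K
    by (simp add: matrix_vector_mult_add_rdistrib krylov_def span_add span_scale)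
  have gK: "g \<in> ?K" by (rule g_in_krylov) simp
  have eq: "cvec B c0 d x (Suc (Suc n)) - cheb (Suc (Suc n)) c0 *\<^sub>R x
      = (2 * c0) *\<^sub>R s1 - (2 * d) *\<^sub>R (B *v s1) + (2 * d * cheb (Suc n) c0) *\<^sub>R g - s0"
    unfolding s1_def s0_def using Bx
    by (simp add: cstep_def algebra_simps matrix_vector_mult_diff_distrib matrix_vector_mult_scaleR)
  show ?case unfolding eq using s1K s0K Bs1 gK
    by (simp add: krylov_def span_add span_diff span_scale)
qed



definition qon :: "nat \<Rightarrow> (nat \<Rightarrow> real^'n) \<Rightarrow> bool" where
  "qon k q \<longleftrightarrow> (\<forall>i\<in>{1..k}. \<forall>j\<in>{1..k}. q i \<bullet> q j = (if i = j then 1 else 0))"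

lemma comb_inner_left: "lanczos_comb q k c \<bullet> y = (\<Sum>i=1..k. c i * (q i \<bullet> y))"
  unfolding lanczos_comb_def by (simp add: inner_sum_left)

lemma comb_inner:
  assumes "qon k q" "i \<in> {1..k}"
  shows "q i \<bullet> lanczos_comb q k c = c i"
proof -
  have "q i \<bullet> lanczos_comb q k c = (\<Sum>j=1..k. c j * (q i \<bullet> q j))"
    unfolding lanczos_comb_def by (simp add: inner_sum_right)
  also have "\<dots> = (\<Sum>j=1..k. if j = i then c j else 0)"
    using assms unfolding qon_def by (intro sum.cong) auto
  also have "\<dots> = c i" using assms(2) by simp
  finally show ?thesis .
qed

lemma comb_norm2:
  assumes "qon k q"
  shows "(norm (lanczos_comb q k c))^2 = (\<Sum>i=1..k. (c i)^2)"
proof -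
  have "(norm (lanczos_comb q k c))^2 = lanczos_comb q k c \<bullet> lanczos_comb q k c"
    by (simp add: power2_norm_eq_inner)
  also have "\<dots> = (\<Sum>i=1..k. c i * (q i \<bullet> lanczos_comb q k c))"
    by (subst (1) lanczos_comb_def) (simp add: inner_sum_left)
  also have "\<dots> = (\<Sum>i=1..k. (c i)^2)"
    using comb_inner[OF assms] by (intro sum.cong) (auto simp: power2_eq_square)
  finally show ?thesis .
qed

lemma knorm_eq:
  assumes "qon k q"
  shows "knorm k c = norm (lanczos_comb q k c)"
  unfolding knorm_def comb_norm2[OF assms, symmetric] by simp

lemma comb_inner_A:
  assumes "qon k q" "i \<in> {1..k}"
  shows "q i \<bullet> (A *v lanczos_comb q k c) = (\<Sum>j=1..k. lanczos_T A q i j * c j)"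
  unfolding lanczos_comb_def lanczos_T_def
  by (simp add: vec.sum matrix_vector_mult_scaleR inner_sum_right mult.commute)

lemma g_q1:
  assumes "q 1 = (1 / norm g) *\<^sub>R g" "g \<noteq> 0"
  shows "g = norm g *\<^sub>R q 1"
  using assms by simp

lemma comb_inner_g:
  assumes "qon k q" "q 1 = (1 / norm g) *\<^sub>R g" "g \<noteq> 0" "1 \<le> k"
  shows "lanczos_comb q k c \<bullet> g = norm g * c 1"
proof -
  have "lanczos_comb q k c \<bullet> g = norm g * (q 1 \<bullet> lanczos_comb q k c)"
  proof -
    have gq: "g = norm g *\<^sub>R q 1" using assms(2,3) by simp
    show ?thesis by (subst gq) (simp add: inner_commute)
  qed
  then show ?thesis using comb_inner[OF assms(1), of 1] assms(4) by simp
qed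

lemma q_inner_g:
  assumes "qon k q" "q 1 = (1 / norm g) *\<^sub>R g" "g \<noteq> 0" "1 \<le> k" "i \<in> {1..k}"
  shows "q i \<bullet> g = norm g * (if i = 1 then 1 else 0)"
proof -
  have gq: "g = norm g *\<^sub>R q 1" using assms(2,3) by simp
  have "q i \<bullet> g = norm g * (q i \<bullet> q 1)" by (subst gq) simp
  then show ?thesis using assms(1,4,5) unfolding qon_def by auto
qed

lemma phi_eq:
  assumes "qon k q" "q 1 = (1 / norm g) *\<^sub>R g" "g \<noteq> 0" "1 \<le> k"
  shows "gltr_phi A g q k c = trs_f A g (lanczos_comb q k c)"
proof -
  have "lanczos_comb q k c \<bullet> (A *v lanczos_comb q k c)
      = (\<Sum>i=1..k. c i * (q i \<bullet> (A *v lanczos_comb q k c)))"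
    by (subst (1) lanczos_comb_def) (simp add: inner_sum_left)
  also have "\<dots> = (\<Sum>i=1..k. \<Sum>j=1..k. c i * lanczos_T A q i j * c j)"
    using comb_inner_A[OF assms(1)] by (intro sum.cong) (auto simp: sum_distrib_left mult.assoc)
  finally show ?thesis unfolding gltr_phi_def trs_f_def comb_inner_g[OF assms] by simp
qed

lemma resid_orth:
  assumes "qon k q" "q 1 = (1 / norm g) *\<^sub>R g" "g \<noteq> 0" "1 \<le> k" "i \<in> {1..k}"
    and eq: "\<forall>i\<in>{1..k}. (\<Sum>j=1..k. lanczos_T A q i j * h j) + lam * h i
                    = - norm g * (if i = 1 then 1 else 0)"
  shows "q i \<bullet> ((A + lam *\<^sub>R mat 1) *v lanczos_comb q k h + g) = 0"
proof -
  have "q i \<bullet> ((A + lam *\<^sub>R mat 1) *v lanczos_comb q k h + g)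
     = q i \<bullet> (A *v lanczos_comb q k h) + lam * (q i \<bullet> lanczos_comb q k h) + q i \<bullet> g"
    by (simp add: matrix_vector_mult_add_rdistrib inner_add_right)
  also have "\<dots> = (\<Sum>j=1..k. lanczos_T A q i j * h j) + lam * h i + norm g * (if i = 1 then 1 else 0)"
    using comb_inner_A[OF assms(1,5)] comb_inner[OF assms(1,5)] q_inner_g[OF assms(1-5)] by simp
  also have "\<dots> = 0" using eq assms(5) by simp
  finally show ?thesis .
qed

lemma resid_orth_x:
  assumes "qon k q" "q 1 = (1 / norm g) *\<^sub>R g" "g \<noteq> 0" "1 \<le> k"
    and eq: "\<forall>i\<in>{1..k}. (\<Sum>j=1..k. lanczos_T A q i j * h j) + lam * h i
                    = - norm g * (if i = 1 then 1 else 0)"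
  shows "((A + lam *\<^sub>R mat 1) *v lanczos_comb q k h + g) \<bullet> lanczos_comb q k h = 0"
proof -
  let ?r = "(A + lam *\<^sub>R mat 1) *v lanczos_comb q k h + g"
  have "?r \<bullet> lanczos_comb q k h = (\<Sum>i=1..k. h i * (q i \<bullet> ?r))"
    by (subst inner_commute) (rule comb_inner_left)
  also have "\<dots> = 0" using resid_orth[OF assms(1-4) _ eq] by simp
  finally show ?thesis .
qed

lemma proj_orth:
  assumes "qon k q" "i \<in> {1..k}"
  shows "q i \<bullet> (x - lanczos_comb q k (\<lambda>j. q j \<bullet> x)) = 0"
  using comb_inner[OF assms] by (simp add: inner_diff_right)

lemma eps_eq: "eps_k q k x = norm (x - lanczos_comb q k (\<lambda>j. q j \<bullet> x))"
  unfolding eps_k_def lanczos_comb_def by simp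

lemma proj_min:
  assumes "qon k q" "v \<in> span (q ` {1..k})"
  shows "eps_k q k x \<le> norm (x - v)"
proof -
  let ?z = "lanczos_comb q k (\<lambda>j. q j \<bullet> x)"
  have zS: "?z \<in> span (q ` {1..k})" unfolding lanczos_comb_def
    by (intro span_sum span_scale span_base) auto
  have "?z - v \<in> span (q ` {1..k})" using zS assms(2) by (rule span_diff)
  have o: "orthogonal (x - ?z) (?z - v)"
  proof (rule orthogonal_to_span[OF \<open>?z - v \<in> span (q ` {1..k})\<close>])
    fix y assume "y \<in> q ` {1..k}"
    then obtain i where i: "i \<in> {1..k}" "y = q i" by auto
    have "q i \<bullet> (x - ?z) = 0" by (rule proj_orth[OF assms(1) i(1)])
    then show "orthogonal (x - ?z) y" unfolding orthogonal_def i(2) by (simp add: inner_commute)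
  qed
  have "(norm (x - v))^2 = (norm ((x - ?z) + (?z - v)))^2" by simp
  also have "\<dots> = (norm (x - ?z))^2 + (norm (?z - v))^2" using norm_add_Pythagorean[OF o] .
  finally have "(norm (x - ?z))^2 \<le> (norm (x - v))^2" by simp
  then have "norm (x - ?z) \<le> norm (x - v)" by (rule power2_le_imp_le) simp
  then show ?thesis unfolding eps_eq .
qed



lemma symB:
  fixes A :: "real^'n^'n"
  assumes "transpose A = A"
  shows "((A + c *\<^sub>R mat 1) *v x) \<bullet> y = x \<bullet> ((A + c *\<^sub>R mat 1) *v y)"
  using sym_inner[OF assms, of x y]
  by (simp add: matrix_vector_mult_add_rdistrib inner_add_left inner_add_right)

lemma semi_cs:
  fixes B :: "real^'n^'n"
  assumes sym: "\<And>x y. (B *v x) \<bullet> y = x \<bullet> (B *v y)" and psd: "\<And>v. v \<bullet> (B *v v) \<ge> 0"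
  shows "(u \<bullet> (B *v v))^2 \<le> (u \<bullet> (B *v u)) * (v \<bullet> (B *v v))"
proof -
  define c where "c = u \<bullet> (B *v v)"
  define Qu where "Qu = u \<bullet> (B *v u)"
  define Qv where "Qv = v \<bullet> (B *v v)"
  have vu: "v \<bullet> (B *v u) = c" unfolding c_def using sym[of v u] by (simp add: inner_commute)
  have quad: "0 \<le> Qu + 2 * t * c + t^2 * Qv" for t
  proof -
    have "0 \<le> (u + t *\<^sub>R v) \<bullet> (B *v (u + t *\<^sub>R v))" by (rule psd)
    also have "\<dots> = Qu + 2 * t * c + t^2 * Qv"
      unfolding Qu_def Qv_def c_def using vu[unfolded c_def]
      by (simp add: matrix_vector_right_distrib matrix_vector_mult_scaleR inner_add_left
          inner_add_right power2_eq_square algebra_simps)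
    finally show ?thesis .
  qed
  have Qv0: "Qv \<ge> 0" unfolding Qv_def by (rule psd)
  show ?thesis
  proof (cases "Qv = 0")
    case True
    have "c = 0"
    proof (rule ccontr)
      assume "c \<noteq> 0"
      have "0 \<le> Qu + 2 * (- (Qu + 1) / (2 * c)) * c" using quad[of "- (Qu + 1) / (2 * c)"] True by simp
      also have "\<dots> = -1" using \<open>c \<noteq> 0\<close> by (simp add: field_simps)
      finally show False by simp
    qed
    then show ?thesis unfolding c_def[symmetric] Qu_def[symmetric] Qv_def[symmetric] True by simp
  next
    case False
    hence pos: "Qv > 0" using Qv0 by simp
    have "0 \<le> Qu + 2 * (- c / Qv) * c + (- c / Qv)^2 * Qv" by (rule quad)
    also have "\<dots> = Qu - c^2 / Qv" using pos by (simp add: field_simps power2_eq_square)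
    finally have "c^2 / Qv \<le> Qu" by simp
    hence "c^2 \<le> Qu * Qv" using pos by (simp add: divide_le_eq)
    then show ?thesis unfolding c_def Qu_def Qv_def .
  qed
qed

lemma Bw_bound:
  fixes B :: "real^'n^'n"
  assumes sym: "\<And>x y. (B *v x) \<bullet> y = x \<bullet> (B *v y)" and psd: "\<And>v. v \<bullet> (B *v v) \<ge> 0"
  shows "(norm (B *v w))^2 \<le> onorm ((*v) B) * (w \<bullet> (B *v w))"
proof -
  let ?nA = "onorm ((*v) B)"
  have bl: "bounded_linear ((*v) B)" by (rule matrix_vector_mul_bounded_linear)
  have nA0: "?nA \<ge> 0" by (rule onorm_pos_le[OF bl])
  have nb: "norm (B *v x) \<le> ?nA * norm x" for x using onorm[OF bl, of x] by simp
  have e1: "w \<bullet> (B *v (B *v w)) = (norm (B *v w))^2"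
    using sym[of w "B *v w"] by (simp add: power2_norm_eq_inner)
  have cs: "(w \<bullet> (B *v (B *v w)))^2 \<le> (w \<bullet> (B *v w)) * ((B *v w) \<bullet> (B *v (B *v w)))"
    by (rule semi_cs[OF sym psd])
  have "(B *v w) \<bullet> (B *v (B *v w)) \<le> norm (B *v w) * norm (B *v (B *v w))" by (rule norm_cauchy_schwarz)
  also have "\<dots> \<le> norm (B *v w) * (?nA * norm (B *v w))" by (rule mult_left_mono[OF nb]) simp
  finally have q2: "(B *v w) \<bullet> (B *v (B *v w)) \<le> ?nA * (norm (B *v w))^2" by (simp add: power2_eq_square algebra_simps)
  have Qw: "w \<bullet> (B *v w) \<ge> 0" by (rule psd)
  have "((norm (B *v w))^2)^2 \<le> (w \<bullet> (B *v w)) * (?nA * (norm (B *v w))^2)"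
    using cs e1 mult_left_mono[OF q2 Qw] by simp
  hence "(norm (B *v w))^2 * (norm (B *v w))^2 \<le> (?nA * (w \<bullet> (B *v w))) * (norm (B *v w))^2"
    by (simp add: power2_eq_square algebra_simps)
  then show ?thesis
  proof (cases "norm (B *v w) = 0")
    case True
    then show ?thesis using nA0 Qw by simp
  next
    case False
    hence "(norm (B *v w))^2 > 0" by simp
    with \<open>(norm (B *v w))^2 * (norm (B *v w))^2 \<le> (?nA * (w \<bullet> (B *v w))) * (norm (B *v w))^2\<close>
    show ?thesis by (rule mult_right_le_imp_le)
  qed
qed

lemma Q_le:
  fixes B :: "real^'n^'n"
  shows "w \<bullet> (B *v w) \<le> onorm ((*v) B) * (norm w)^2"
proof -
  have bl: "bounded_linear ((*v) B)" by (rule matrix_vector_mul_bounded_linear)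
  have "w \<bullet> (B *v w) \<le> norm w * norm (B *v w)" by (rule norm_cauchy_schwarz)
  also have "\<dots> \<le> norm w * (onorm ((*v) B) * norm w)" using onorm[OF bl, of w] by (simp add: mult_left_mono)
  finally show ?thesis by (simp add: power2_eq_square algebra_simps)
qed

lemma f_diff:
  fixes A :: "real^'n^'n"
  assumes sym: "transpose A = A" and Bxo: "(A + lam *\<^sub>R mat 1) *v xo = - g"
    and nxo: "norm xo = D" and nx: "norm x = D"
  shows "trs_f A g x - trs_f A g xo
       = (1/2) * ((x - xo) \<bullet> ((A + lam *\<^sub>R mat 1) *v (x - xo)))"
proof -
  let ?B = "A + lam *\<^sub>R mat 1"
  have xx: "x \<bullet> x = D^2" using nx by (simp add: power2_norm_eq_inner[symmetric])
  have oo: "xo \<bullet> xo = D^2" using nxo by (simp add: power2_norm_eq_inner[symmetric])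
  have h1: "x \<bullet> (?B *v x) = x \<bullet> (A *v x) + lam * (x \<bullet> x)"
    by (simp add: matrix_vector_mult_add_rdistrib inner_add_right)
  have h5: "xo \<bullet> (?B *v xo) = xo \<bullet> (A *v xo) + lam * (xo \<bullet> xo)"
    by (simp add: matrix_vector_mult_add_rdistrib inner_add_right)
  have h3: "x \<bullet> (?B *v xo) = - (x \<bullet> g)" using Bxo by simp
  have h4: "xo \<bullet> (?B *v xo) = - (xo \<bullet> g)" using Bxo by simp
  have h2: "xo \<bullet> (?B *v x) = - (x \<bullet> g)"
    using symB[OF sym, of lam xo x] Bxo by (simp add: inner_commute)
  have "(x - xo) \<bullet> (?B *v (x - xo)) = x \<bullet> (?B *v x) - x \<bullet> (?B *v xo) - xo \<bullet> (?B *v x) + xo \<bullet> (?B *v xo)"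
    by (simp add: matrix_vector_mult_diff_distrib inner_diff_left inner_diff_right)
  then show ?thesis unfolding trs_f_def using h1 h2 h3 h4 h5 xx oo by (simp add: inner_commute[of xo g] algebra_simps)
qed

lemma alg1:
  fixes s D e :: real
  assumes "0 \<le> s" "s \<le> D" "0 < D" "e^2 = D^2 - s^2"
  shows "2 * D * (D - s) \<le> (1 + e^2 / D^2) * e^2"
proof -
  have "(1 + e^2 / D^2) * e^2 = (1 + (D^2 - s^2) / D^2) * (D^2 - s^2)"
    by (simp only: assms(4))
  also have "\<dots> = ((2 * D^2 - s^2) * (D^2 - s^2)) / D^2"
    using assms by (simp add: field_simps)
  finally have "(1 + e^2 / D^2) * e^2 = ((2 * D^2 - s^2) * (D^2 - s^2)) / D^2" .
  moreover have "2 * D * (D - s) = (2 * D^3 * (D - s)) / D^2" using assms by (simp add: field_simps power2_eq_square power3_eq_cube)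
  moreover have "2 * D^3 * (D - s) \<le> (2 * D^2 - s^2) * (D^2 - s^2)"
  proof -
    have "(2 * D^2 - s^2) * (D^2 - s^2) - 2 * D^3 * (D - s) = s * (D - s)^2 * (2 * D + s)"
      by (simp add: algebra_simps power2_eq_square power3_eq_cube)
    moreover have "s * (D - s)^2 * (2 * D + s) \<ge> 0" using assms by simp
    ultimately show ?thesis by linarith
  qed
  ultimately show ?thesis using assms by (simp add: divide_right_mono)
qed



lemma B_sum:
  fixes B :: "real^'n^'n"
  assumes "\<And>e. e \<in> E \<Longrightarrow> B *v e = \<nu> e *\<^sub>R e"
  shows "B *v (\<Sum>e\<in>E. a e *\<^sub>R e) = (\<Sum>e\<in>E. (a e * \<nu> e) *\<^sub>R e)"
  using assms by (simp add: vec.sum matrix_vector_mult_scaleR)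

lemma eps_bound:
  fixes A :: "real^'n^'n"
  assumes sym: "transpose A = A"
    and Bxo: "(A + lam *\<^sub>R mat 1) *v xo = - g"
    and nxo: "norm xo = D"
    and easy: "lam > - alpha_min A"
    and k1: "1 \<le> k"
    and qon: "qon k q" and spK: "span (q ` {1..k}) = krylov A g k"
  shows "eps_k q k xo \<le> 2 * D * ((sqrt ((alpha_max A + lam) / (alpha_min A + lam)) - 1)
                                  / (sqrt ((alpha_max A + lam) / (alpha_min A + lam)) + 1)) ^ k"
proof -
  obtain E \<mu> where onbE: "onb E" and spE: "span E = UNIV" and ev: "\<And>e. e \<in> E \<Longrightarrow> A *v e = \<mu> e *\<^sub>R e"
    using spectral[OF sym] by blast
  have D0: "0 \<le> D" using nxo norm_ge_zero[of xo] by linarith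
  have finE: "finite E" using onbE unfolding onb_def by auto
  have ee: "e \<bullet> e = 1" if "e \<in> E" for e using onbE that unfolding onb_def by auto
  have Ene: "E \<noteq> {}"
  proof
    assume "E = {}"
    hence "(UNIV :: (real^'n) set) = {0}" using spE by simp
    moreover have "(axis undefined 1 :: real^'n) \<noteq> 0" by (simp add: axis_eq_0_iff)
    ultimately show False by auto
  qed
  have ev_in: "\<mu> e \<in> eigvals A" if "e \<in> E" for e
    unfolding eigvals_def using ev[OF that] ee[OF that] by (intro CollectI exI[of _ e]) auto
  have eig_sub: "eigvals A \<subseteq> \<mu> ` E"
  proof
    fix \<alpha> assume "\<alpha> \<in> eigvals A"
    then obtain v where v: "v \<noteq> 0" "A *v v = \<alpha> *\<^sub>R v" unfolding eigvals_def by auto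
    have vexp: "v = (\<Sum>e\<in>E. (e \<bullet> v) *\<^sub>R e)" by (rule onb_expand[OF onbE spE])
    have "\<exists>e\<in>E. e \<bullet> v \<noteq> 0"
    proof (rule ccontr)
      assume "\<not> ?thesis"
      hence "(\<Sum>e\<in>E. (e \<bullet> v) *\<^sub>R e) = 0" by simp
      with vexp v(1) show False by simp
    qed
    then obtain e where e: "e \<in> E" "e \<bullet> v \<noteq> 0" by blast
    have "\<alpha> * (e \<bullet> v) = e \<bullet> (A *v v)" using v(2) by simp
    also have "\<dots> = (A *v e) \<bullet> v" using sym_inner[OF sym, of e v] by simp
    also have "\<dots> = \<mu> e * (e \<bullet> v)" using ev[OF e(1)] by simp
    finally have "\<alpha> = \<mu> e" using e(2) by simp
    then show "\<alpha> \<in> \<mu> ` E" using e(1) by blast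
  qed
  have fin_eig: "finite (eigvals A)" using finite_subset[OF eig_sub] finE by blast
  have lo: "alpha_min A \<le> \<mu> e" if "e \<in> E" for e
    unfolding alpha_min_def using fin_eig ev_in[OF that] by (rule Min_le)
  have hi: "\<mu> e \<le> alpha_max A" if "e \<in> E" for e
    unfolding alpha_max_def using fin_eig ev_in[OF that] by (rule Max_ge)
  define a where "a = alpha_min A + lam"
  define b where "b = alpha_max A + lam"
  have a0: "a > 0" unfolding a_def using easy by simp
  obtain e0 where e0: "e0 \<in> E" using Ene by blast
  have ab: "a \<le> b" unfolding a_def b_def using lo[OF e0] hi[OF e0] by simp
  define B where "B = A + lam *\<^sub>R mat 1"
  have Bev: "B *v e = (\<mu> e + lam) *\<^sub>R e" if "e \<in> E" for e
    unfolding B_def using ev[OF that] by (simp add: matrix_vector_mult_add_rdistrib algebra_simps)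
  have xexp: "xo = (\<Sum>e\<in>E. (e \<bullet> xo) *\<^sub>R e)" by (rule onb_expand[OF onbE spE])
  have Bxo': "B *v xo = - g" using Bxo unfolding B_def .
  have minK: "eps_k q k xo \<le> norm (xo - v)" if "v \<in> krylov A g k" for v
    using proj_min[OF qon] that spK by simp
  show ?thesis
  proof (cases "a = b")
    case True
    have mu_eq: "\<mu> e + lam = a" if "e \<in> E" for e
      using lo[OF that] hi[OF that] True unfolding a_def b_def by simp
    have "B *v xo = (\<Sum>e\<in>E. ((e \<bullet> xo) * (\<mu> e + lam)) *\<^sub>R e)"
      by (subst xexp) (rule B_sum[OF Bev])
    also have "\<dots> = (\<Sum>e\<in>E. (a * (e \<bullet> xo)) *\<^sub>R e)" using mu_eq by (intro sum.cong) auto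
    also have "\<dots> = a *\<^sub>R xo" by (subst (2) xexp) (simp add: scaleR_sum_right)
    finally have axo: "a *\<^sub>R xo = - g" using Bxo' by simp
    have "xo = (- 1 / a) *\<^sub>R g"
    proof -
      have "(- 1 / a) *\<^sub>R g = (- 1 / a) *\<^sub>R (- (a *\<^sub>R xo))" using axo by simp
      also have "\<dots> = xo" using a0 by simp
      finally show ?thesis by simp
    qed
    hence "xo \<in> krylov A g k" using g_in_krylov[OF k1, of g A] by (simp add: krylov_def span_scale span_neg)
    hence "eps_k q k xo \<le> 0" using minK[of xo] by simp
    moreover have "(alpha_max A + lam) / (alpha_min A + lam) = 1" using True a0 unfolding a_def b_def by simp
    ultimately show ?thesis using k1 by (simp add: zero_power)
  next
    case False
    hence ab': "a < b" using ab by simp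
    define kap where "kap = b / a"
    have kap1: "kap > 1" unfolding kap_def using ab' a0 by simp
    define r0 where "r0 = sqrt kap"
    have r01: "r0 > 1" unfolding r0_def using kap1 by simp
    have r0sq: "r0^2 = kap" unfolding r0_def using kap1 by simp
    define u where "u = (r0 + 1) / (r0 - 1)"
    define v where "v = (r0 - 1) / (r0 + 1)"
    have uv: "u * v = 1" unfolding u_def v_def using r01 by simp
    have v0: "v \<ge> 0" unfolding v_def using r01 by simp
    have u0: "u > 0" unfolding u_def using r01 by simp
    define c0 where "c0 = (b + a) / (b - a)"
    define d where "d = 2 / (b - a)"
    have c0uv: "c0 = (u + v) / 2"
    proof -
      have "(u + v) / 2 = (r0^2 + 1) / (r0^2 - 1)"
      proof -
        have rr: "1 < r0 * r0" using less_1_mult[OF r01 r01] .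
        have "r0 * (r0 * 2) - 2 = 2 * (r0 * r0 - 1)" by (simp add: algebra_simps)
        then show ?thesis
          unfolding u_def v_def using r01 rr by (simp add: field_simps power2_eq_square)
      qed
      also have "\<dots> = (b + a) / (b - a)" unfolding r0sq kap_def using a0 ab'
        by (simp add: field_simps)
      finally have "(u + v) / 2 = (b + a) / (b - a)" .
      then show ?thesis unfolding c0_def by linarith
    qed
    define T where "T = cheb k c0"
    have Teq: "T = (u^k + v^k) / 2" unfolding T_def c0uv by (rule cheb_u[OF uv])
    have Tge: "T \<ge> u^k / 2" unfolding Teq using v0 by simp
    have "u^k > 0" using u0 by simp
    hence Tpos: "T > 0" using Tge by linarith
    define w where "w = cvec B c0 d xo k"
    have wexp: "w = (\<Sum>e\<in>E. ((e \<bullet> xo) * cheb k (c0 - d * (\<mu> e + lam))) *\<^sub>R e)"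
      unfolding w_def by (subst xexp) (rule cvec_expand[OF Bev])
    have mb: "\<bar>c0 - d * (\<mu> e + lam)\<bar> \<le> 1" if "e \<in> E" for e
    proof -
      have m1: "a \<le> \<mu> e + lam" "\<mu> e + lam \<le> b" using lo[OF that] hi[OF that] unfolding a_def b_def by auto
      have "c0 - d * (\<mu> e + lam) = (b + a - 2 * (\<mu> e + lam)) / (b - a)"
      proof -
        have ne: "b - a \<noteq> 0" using ab' by simp
        show ?thesis unfolding c0_def d_def by (simp add: diff_divide_distrib)
      qed
      moreover have "\<bar>(b + a - 2 * (\<mu> e + lam)) / (b - a)\<bar> \<le> 1"
        using ab' m1 by (simp add: abs_le_iff divide_le_eq le_divide_eq)
      ultimately show ?thesis by simp
    qed
    have nw: "norm w \<le> D"
    proof -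
      have "(norm w)^2 = (\<Sum>e\<in>E. ((e \<bullet> xo) * cheb k (c0 - d * (\<mu> e + lam)))^2)"
        unfolding wexp by (rule onb_norm2[OF onbE])
      also have "\<dots> \<le> (\<Sum>e\<in>E. (e \<bullet> xo)^2)"
      proof (rule sum_mono)
        fix e assume e: "e \<in> E"
        have "\<bar>cheb k (c0 - d * (\<mu> e + lam))\<bar> \<le> 1" by (rule cheb_abs[OF mb[OF e]])
        hence "(cheb k (c0 - d * (\<mu> e + lam)))^2 \<le> 1"
          using power_mono[of "\<bar>cheb k (c0 - d * (\<mu> e + lam))\<bar>" 1 2] by simp
        hence "(e \<bullet> xo)^2 * (cheb k (c0 - d * (\<mu> e + lam)))^2 \<le> (e \<bullet> xo)^2 * 1"
          by (intro mult_left_mono) simp_all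
        then show "((e \<bullet> xo) * cheb k (c0 - d * (\<mu> e + lam)))^2 \<le> (e \<bullet> xo)^2"
          by (simp add: power_mult_distrib)
      qed
      also have "\<dots> = (norm xo)^2" by (subst (2) xexp) (rule onb_norm2[OF onbE, symmetric])
      finally have "(norm w)^2 \<le> D^2" using nxo by simp
      then show ?thesis by (rule power2_le_imp_le) (use D0 in simp)
    qed
    have wK: "w - T *\<^sub>R xo \<in> krylov A g k"
      unfolding w_def T_def by (rule cvec_krylov[OF B_def Bxo'])
    have "xo - (1 / T) *\<^sub>R w = - (1 / T) *\<^sub>R (w - T *\<^sub>R xo)" using Tpos by (simp add: algebra_simps)
    hence vK: "xo - (1 / T) *\<^sub>R w \<in> krylov A g k" using wK by (simp add: krylov_def span_scale span_neg)
    have "eps_k q k xo \<le> norm (xo - (xo - (1 / T) *\<^sub>R w))" by (rule minK[OF vK])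
    also have "\<dots> = norm w / T" using Tpos by simp
    also have "\<dots> \<le> D / T" using nw Tpos by (simp add: divide_right_mono)
    also have "\<dots> \<le> D / (u^k / 2)"
      using Tge u0 D0 Tpos by (intro divide_left_mono) auto
    also have "\<dots> = 2 * D * v^k"
    proof -
      have "u^k * v^k = 1" using uv by (metis power_mult_distrib power_one)
      then show ?thesis using u0 by (simp add: field_simps)
    qed
    finally show ?thesis unfolding v_def r0_def kap_def a_def b_def .
  qed
qed


theorem theorem3p5:
  fixes A :: "real^'n^'n" and g x_opt :: "real^'n" and \<Delta> lam_opt lam_k :: real
    and q :: "nat \<Rightarrow> real^'n" and h :: "nat \<Rightarrow> real" and k :: nat
  assumes sym: "transpose A = A"
    and g_nz: "g \<noteq> 0"
    and Delta_pos: "\<Delta> > 0"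
    and opt_feas: "norm x_opt \<le> \<Delta>"
    and opt_min: "\<forall>x. norm x \<le> \<Delta> \<longrightarrow> trs_f A g x_opt \<le> trs_f A g x"
    and lam_nonneg: "lam_opt \<ge> 0"
    and opt_eq: "(A + lam_opt *\<^sub>R mat 1) *v x_opt = - g"
    and opt_compl: "lam_opt * (\<Delta> - norm x_opt) = 0"
    and opt_psd: "\<forall>v. v \<bullet> ((A + lam_opt *\<^sub>R mat 1) *v v) \<ge> 0"
    and easy: "lam_opt > - alpha_min A"
    and k_range: "1 \<le> k" "k \<le> k_max A g"
    and lanczos: "lanczos_vectors A g k q"
    and gltr: "gltr_sol A g \<Delta> q k h lam_k"
    and bd_opt: "norm x_opt = \<Delta>"
    and bd_k: "norm (lanczos_comb q k h) = \<Delta>"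
  shows
    "let A_opt = A + lam_opt *\<^sub>R mat 1;
         nA = onorm (\<lambda>v. A_opt *v v);
         \<kappa> = (alpha_max A + lam_opt) / (alpha_min A + lam_opt);
         x_k = lanczos_comb q k h;
         r_k = (A + lam_k *\<^sub>R mat 1) *v x_k + g;
         \<epsilon> = eps_k q k x_opt
     in norm r_k \<le> nA * sqrt (1 + \<epsilon>^2 / \<Delta>^2) * \<epsilon>
        \<and> nA * sqrt (1 + \<epsilon>^2 / \<Delta>^2) * \<epsilon>
            \<le> 2 * nA * sqrt (\<Delta>^2 + \<epsilon>^2) * ((sqrt \<kappa> - 1) / (sqrt \<kappa> + 1)) ^ k"
proof -
  have qon: "qon k q" and q1: "q 1 = (1 / norm g) *\<^sub>R g"
    and spK: "span (q ` {1..k}) = krylov A g k"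
    using lanczos k_range(1) unfolding lanczos_vectors_def qon_def by auto
  have hmin: "\<And>h'. knorm k h' \<le> \<Delta> \<Longrightarrow> gltr_phi A g q k h \<le> gltr_phi A g q k h'"
    and heq: "\<forall>i\<in>{1..k}. (\<Sum>j=1..k. lanczos_T A q i j * h j) + lam_k * h i
                    = - norm g * (if i = 1 then 1 else 0)"
    using gltr unfolding gltr_sol_def by auto
  define B where "B = A + lam_opt *\<^sub>R mat 1"
  define nA where "nA = onorm (\<lambda>v. B *v v)"
  define xk where "xk = lanczos_comb q k h"
  define r where "r = (A + lam_k *\<^sub>R mat 1) *v xk + g"
  define eps where "eps = eps_k q k x_opt"
  define kap where "kap = (alpha_max A + lam_opt) / (alpha_min A + lam_opt)"
  define rho where "rho = (sqrt kap - 1) / (sqrt kap + 1)"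
  have nAeq: "nA = onorm ((*v) B)" unfolding nA_def by simp
  have bl: "bounded_linear ((*v) B)" by (rule matrix_vector_mul_bounded_linear)
  have nA0: "nA \<ge> 0" unfolding nAeq by (rule onorm_pos_le[OF bl])
  have Bsym: "\<And>x y. (B *v x) \<bullet> y = x \<bullet> (B *v y)" unfolding B_def by (rule symB[OF sym])
  have Bpsd: "\<And>v. v \<bullet> (B *v v) \<ge> 0" using opt_psd unfolding B_def by auto
  have Bxo: "B *v x_opt = - g" using opt_eq unfolding B_def .
  have eps0: "eps \<ge> 0" unfolding eps_def eps_eq by simp
  
  define z where "z = lanczos_comb q k (\<lambda>j. q j \<bullet> x_opt)"
  define s where "s = norm z"
  have s0: "s \<ge> 0" unfolding s_def by simp
  have zxo: "z \<bullet> x_opt = s^2"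
    unfolding s_def z_def comb_inner_left comb_norm2[OF qon] by (simp add: power2_eq_square)
  have eps2: "eps^2 = \<Delta>^2 - s^2"
  proof -
    have "eps^2 = (x_opt - z) \<bullet> (x_opt - z)" unfolding eps_def eps_eq z_def by (simp add: power2_norm_eq_inner)
    also have "\<dots> = x_opt \<bullet> x_opt - 2 * (z \<bullet> x_opt) + z \<bullet> z"
      by (simp add: inner_diff_left inner_diff_right inner_commute)
    also have "\<dots> = \<Delta>^2 - s^2" using bd_opt zxo unfolding s_def
      by (simp add: power2_norm_eq_inner[symmetric])
    finally show ?thesis .
  qed
  have sD: "s \<le> \<Delta>"
  proof -
    have "eps^2 \<ge> 0" by simp
    hence "s^2 \<le> \<Delta>^2" using eps2 by linarith
    then show ?thesis by (rule power2_le_imp_le) (use Delta_pos in simp)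
  qed
  
  have first: "norm r \<le> nA * sqrt (1 + eps^2 / \<Delta>^2) * eps"
  proof -
    have rx: "r \<bullet> xk = 0" unfolding r_def xk_def by (rule resid_orth_x[OF qon q1 g_nz k_range(1) heq])
    have Bw: "B *v (xk - x_opt) = r + (lam_opt - lam_k) *\<^sub>R xk"
      unfolding B_def r_def using opt_eq
      by (simp add: matrix_vector_mult_diff_distrib matrix_vector_mult_add_rdistrib algebra_simps B_def)
    have "orthogonal r ((lam_opt - lam_k) *\<^sub>R xk)" using rx unfolding orthogonal_def by simp
    hence "(norm (B *v (xk - x_opt)))^2 = (norm r)^2 + (norm ((lam_opt - lam_k) *\<^sub>R xk))^2"
      unfolding Bw by (rule norm_add_Pythagorean)
    hence r1: "(norm r)^2 \<le> (norm (B *v (xk - x_opt)))^2" by simp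
    have r2: "(norm (B *v (xk - x_opt)))^2 \<le> nA * ((xk - x_opt) \<bullet> (B *v (xk - x_opt)))"
      unfolding nAeq by (rule Bw_bound[OF Bsym Bpsd])
    define cy where "cy = (if z = 0 then (\<lambda>i. if i = 1 then \<Delta> else 0) else (\<lambda>i. (\<Delta> / s) * (q i \<bullet> x_opt)))"
    define y where "y = lanczos_comb q k cy"
    have ny: "norm y = \<Delta>"
    proof (cases "z = 0")
      case True
      have "(norm y)^2 = (\<Sum>i=1..k. (if i = 1 then \<Delta> else 0)^2)"
        unfolding y_def comb_norm2[OF qon] cy_def using True by simp
      also have "\<dots> = (\<Sum>i=1..k. if i = 1 then \<Delta>^2 else 0)" by (intro sum.cong) auto
      also have "\<dots> = \<Delta>^2" using k_range(1) by simp
      finally show ?thesis using Delta_pos norm_ge_zero[of y] by (auto simp: power2_eq_iff)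
    next
      case False
      have "cy = (\<lambda>i. (\<Delta> / s) * (q i \<bullet> x_opt))" using False unfolding cy_def by simp
      hence "y = (\<Delta> / s) *\<^sub>R z" unfolding y_def z_def lanczos_comb_def
        by (simp add: scaleR_sum_right)
      then show ?thesis using False Delta_pos unfolding s_def by simp
    qed
    have yxo: "y \<bullet> x_opt = \<Delta> * s"
    proof (cases "z = 0")
      case True
      have "q 1 \<bullet> z = q 1 \<bullet> x_opt" unfolding z_def using comb_inner[OF qon, of 1] k_range(1) by simp
      hence q1x: "q 1 \<bullet> x_opt = 0" using True by simp
      have "y \<bullet> x_opt = (\<Sum>i=1..k. (if i = 1 then \<Delta> else 0) * (q i \<bullet> x_opt))"
        unfolding y_def comb_inner_left cy_def using True by simp
      also have "\<dots> = (\<Sum>i=1..k. if i = 1 then \<Delta> * (q 1 \<bullet> x_opt) else 0)" by (intro sum.cong) auto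
      also have "\<dots> = 0" using q1x by simp
      finally show ?thesis using True unfolding s_def by simp
    next
      case False
      have "cy = (\<lambda>i. (\<Delta> / s) * (q i \<bullet> x_opt))" using False unfolding cy_def by simp
      hence "y = (\<Delta> / s) *\<^sub>R z" unfolding y_def z_def lanczos_comb_def
        by (simp add: scaleR_sum_right)
      hence "y \<bullet> x_opt = (\<Delta> / s) * s^2" using zxo by simp
      then show ?thesis using False unfolding s_def by (simp add: power2_eq_square)
    qed
    have "knorm k cy \<le> \<Delta>" unfolding knorm_eq[OF qon] y_def[symmetric] ny by simp
    hence "gltr_phi A g q k h \<le> gltr_phi A g q k cy" by (rule hmin)
    hence fle: "trs_f A g xk \<le> trs_f A g y"
      unfolding phi_eq[OF qon q1 g_nz k_range(1)] xk_def y_def .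
    have d1: "trs_f A g xk - trs_f A g x_opt = (1/2) * ((xk - x_opt) \<bullet> (B *v (xk - x_opt)))"
      unfolding B_def by (rule f_diff[OF sym opt_eq bd_opt]) (use bd_k xk_def in simp)
    have d2: "trs_f A g y - trs_f A g x_opt = (1/2) * ((y - x_opt) \<bullet> (B *v (y - x_opt)))"
      unfolding B_def by (rule f_diff[OF sym opt_eq bd_opt ny])
    have r3: "(xk - x_opt) \<bullet> (B *v (xk - x_opt)) \<le> (y - x_opt) \<bullet> (B *v (y - x_opt))"
      using fle d1 d2 by linarith
    have r4: "(y - x_opt) \<bullet> (B *v (y - x_opt)) \<le> nA * (norm (y - x_opt))^2"
      unfolding nAeq by (rule Q_le)
    have nyx: "(norm (y - x_opt))^2 = 2 * \<Delta> * (\<Delta> - s)"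
    proof -
      have "(norm (y - x_opt))^2 = y \<bullet> y - 2 * (y \<bullet> x_opt) + x_opt \<bullet> x_opt"
        by (simp add: power2_norm_eq_inner inner_diff_left inner_diff_right inner_commute)
      also have "\<dots> = 2 * \<Delta> * (\<Delta> - s)" using ny bd_opt yxo
        by (simp add: power2_norm_eq_inner[symmetric] power2_eq_square algebra_simps)
      finally show ?thesis .
    qed
    have "(norm r)^2 \<le> nA * (nA * (2 * \<Delta> * (\<Delta> - s)))"
    proof -
      have r4': "(y - x_opt) \<bullet> (B *v (y - x_opt)) \<le> nA * (2 * \<Delta> * (\<Delta> - s))"
        using r4 nyx by simp
      show ?thesis using r1 r2 mult_left_mono[OF r3 nA0] mult_left_mono[OF r4' nA0] by linarith
    qed
    also have "\<dots> \<le> nA * (nA * ((1 + eps^2 / \<Delta>^2) * eps^2))"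
      using alg1[OF s0 sD Delta_pos eps2] nA0 by (simp add: mult_left_mono)
    also have "\<dots> = (nA * sqrt (1 + eps^2 / \<Delta>^2) * eps)^2"
      using eps0 by (simp add: power_mult_distrib add_nonneg_nonneg power2_eq_square)
    finally have "(norm r)^2 \<le> (nA * sqrt (1 + eps^2 / \<Delta>^2) * eps)^2" .
    then show ?thesis by (rule power2_le_imp_le) (use nA0 eps0 in simp)
  qed
  
  have epsb: "eps \<le> 2 * \<Delta> * rho ^ k"
    unfolding eps_def rho_def kap_def
    by (rule eps_bound[OF sym opt_eq bd_opt easy k_range(1) qon spK])
  have second: "nA * sqrt (1 + eps^2 / \<Delta>^2) * eps \<le> 2 * nA * sqrt (\<Delta>^2 + eps^2) * rho ^ k"
  proof -
    have sq: "sqrt (1 + eps^2 / \<Delta>^2) = sqrt (\<Delta>^2 + eps^2) / \<Delta>"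
    proof -
      have "1 + eps^2 / \<Delta>^2 = (\<Delta>^2 + eps^2) / \<Delta>^2" using Delta_pos by (simp add: field_simps)
      then show ?thesis using Delta_pos by (simp add: real_sqrt_divide)
    qed
    have "nA * sqrt (1 + eps^2 / \<Delta>^2) * eps = (nA * sqrt (\<Delta>^2 + eps^2)) * (eps / \<Delta>)"
      unfolding sq by simp
    also have "\<dots> \<le> (nA * sqrt (\<Delta>^2 + eps^2)) * (2 * rho ^ k)"
    proof (rule mult_left_mono)
      show "eps / \<Delta> \<le> 2 * rho ^ k" using epsb Delta_pos by (simp add: divide_le_eq algebra_simps)
      show "0 \<le> nA * sqrt (\<Delta>^2 + eps^2)" using nA0 by simp
    qed
    finally show ?thesis by (simp add: algebra_simps)
  qed
  show ?thesis
    unfolding Let_def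
    using first second
    unfolding B_def[symmetric] nA_def[symmetric] xk_def[symmetric] r_def[symmetric] eps_def[symmetric]
      kap_def[symmetric] rho_def[symmetric]
    by simp
qed

end
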